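(* For any model $M$ (on $n$ variables), $M_{\wedge,\to}$ is contained in $U(n)_{\wedge,\to}$. In particular, $M_{\wedge,\to}$ is a generated submodel of $U(n)$ in which every chain has at most $n$ elements, and $M_{\wedge,\to}$ (as well as $U(n)_{\wedge,\to}$) is finite.
   Context: Fix $n\ge1$ and variables $p_1,\dots,p_n$; $2^n=\{0,1\}^n$ with componentwise order. A model is $(M,\le,c)$, $(M,\le)$ a poset, $c:M\to 2^n$ order-preserving, with intuitionistic Kripke semantics ($x\models p_i$ iff $c(x)_i=1$). A p-morphism of models is an order- and colour-preserving map $f$ such that $f(x)\le y$ implies $f(x')=y$ for some $x'\ge x$. A generated submodel is an up-set with the restricted structure. A point $x$ is separated if for some variable $q$, $x\not\models q$ but all $y>x$ satisfy $q$. $M^s$ is the set of separated points of $M$ with restricted order and colouring; all chains in $M^s$ have at most $n$ elements. $U(n)$ is the $n$-universal model: the generated submodel of the canonical model of IPC on $p_1,\dots,p_n$ (prime filters of the free Heyting algebra on $p_1,\dots,p_n$ ordered by inclusion, $c(x)_i=1$ iff $p_i\in x$) consisting of points with finite up-set. For every model $N$ of finite depth there is a unique p-morphism $N\to U(n)$. For a model $M$, with $f:M^s\to U(n)$ the unique p-morphism, $M_{\wedge,\to}:=f(M^s)$, a generated submodel of $U(n)$; $U(n)_{\wedge,\to}$ is the case $M=U(n)$. *)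

theory Defs
  imports Main
begin

text \<open>A model on n variables (variables indexed 0..n-1): a carrier A with a partial order le
  on A and a colouring c, where c x is the set of indices of variables true at x
  (so c x \<subseteq> {..<n}, i.e. an element of 2^n), order-preserving.\<close>

definition is_model :: "nat \<Rightarrow> 'a set \<Rightarrow> ('a \<Rightarrow> 'a \<Rightarrow> bool) \<Rightarrow> ('a \<Rightarrow> nat set) \<Rightarrow> bool" where
  "is_model n A le c \<longleftrightarrow>
     (\<forall>x\<in>A. le x x) \<and>
     (\<forall>x\<in>A. \<forall>y\<in>A. \<forall>z\<in>A. le x y \<longrightarrow> le y z \<longrightarrow> le x z) \<and>
     (\<forall>x\<in>A. \<forall>y\<in>A. le x y \<longrightarrow> le y x \<longrightarrow> x = y) \<and>
     (\<forall>x\<in>A. c x \<subseteq> {..<n}) \<and>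
     (\<forall>x\<in>A. \<forall>y\<in>A. le x y \<longrightarrow> c x \<subseteq> c y)"

definition p_morphism ::
  "'a set \<Rightarrow> ('a \<Rightarrow> 'a \<Rightarrow> bool) \<Rightarrow> ('a \<Rightarrow> nat set) \<Rightarrow>
   'b set \<Rightarrow> ('b \<Rightarrow> 'b \<Rightarrow> bool) \<Rightarrow> ('b \<Rightarrow> nat set) \<Rightarrow> ('a \<Rightarrow> 'b) \<Rightarrow> bool" where
  "p_morphism A le c B le' c' f \<longleftrightarrow>
     (\<forall>x\<in>A. f x \<in> B) \<and>
     (\<forall>x\<in>A. \<forall>y\<in>A. le x y \<longrightarrow> le' (f x) (f y)) \<and>
     (\<forall>x\<in>A. c' (f x) = c x) \<and>
     (\<forall>x\<in>A. \<forall>y\<in>B. le' (f x) y \<longrightarrow> (\<exists>x'\<in>A. le x x' \<and> f x' = y))"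

definition generated_sub :: "'a set \<Rightarrow> ('a \<Rightarrow> 'a \<Rightarrow> bool) \<Rightarrow> 'a set \<Rightarrow> bool" where
  "generated_sub A le S \<longleftrightarrow> S \<subseteq> A \<and> (\<forall>x\<in>S. \<forall>y\<in>A. le x y \<longrightarrow> y \<in> S)"

definition sep_points :: "nat \<Rightarrow> 'a set \<Rightarrow> ('a \<Rightarrow> 'a \<Rightarrow> bool) \<Rightarrow> ('a \<Rightarrow> nat set) \<Rightarrow> 'a set" where
  "sep_points n A le c =
     {x\<in>A. \<exists>q<n. q \<notin> c x \<and> (\<forall>y\<in>A. le x y \<and> y \<noteq> x \<longrightarrow> q \<in> c y)}"

definition is_chain_in :: "('a \<Rightarrow> 'a \<Rightarrow> bool) \<Rightarrow> 'a set \<Rightarrow> 'a set \<Rightarrow> bool" where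
  "is_chain_in le S C \<longleftrightarrow> C \<subseteq> S \<and> (\<forall>x\<in>C. \<forall>y\<in>C. le x y \<or> le y x)"

datatype form = Var nat | Bot | Conj form form | Disj form form | Impl form form

fun vars :: "form \<Rightarrow> nat set" where
  "vars (Var i) = {i}"
| "vars Bot = {}"
| "vars (Conj a b) = vars a \<union> vars b"
| "vars (Disj a b) = vars a \<union> vars b"
| "vars (Impl a b) = vars a \<union> vars b"

definition lang :: "nat \<Rightarrow> form set" where
  "lang n = {\<phi>. vars \<phi> \<subseteq> {..<n}}"

inductive ipc :: "form \<Rightarrow> bool" where
  ax_K: "ipc (Impl a (Impl b a))"
| ax_S: "ipc (Impl (Impl a (Impl b c)) (Impl (Impl a b) (Impl a c)))"
| ax_C1: "ipc (Impl (Conj a b) a)"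
| ax_C2: "ipc (Impl (Conj a b) b)"
| ax_C3: "ipc (Impl a (Impl b (Conj a b)))"
| ax_D1: "ipc (Impl a (Disj a b))"
| ax_D2: "ipc (Impl b (Disj a b))"
| ax_D3: "ipc (Impl (Impl a c) (Impl (Impl b c) (Impl (Disj a b) c)))"
| ax_EFQ: "ipc (Impl Bot a)"
| mp: "ipc (Impl a b) \<Longrightarrow> ipc a \<Longrightarrow> ipc b"

text \<open>Prime theories in L_n: these are exactly the preimages of prime filters of the free
  Heyting algebra (Lindenbaum algebra of IPC on n variables) under the quotient map.\<close>
definition prime_theory :: "nat \<Rightarrow> form set \<Rightarrow> bool" where
  "prime_theory n T \<longleftrightarrow>
     T \<subseteq> lang n \<and>
     (\<forall>\<phi>\<in>lang n. ipc \<phi> \<longrightarrow> \<phi> \<in> T) \<and>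
     (\<forall>\<phi> \<psi>. \<phi> \<in> T \<longrightarrow> Impl \<phi> \<psi> \<in> T \<longrightarrow> \<psi> \<in> T) \<and>
     Bot \<notin> T \<and>
     (\<forall>\<phi> \<psi>. Disj \<phi> \<psi> \<in> T \<longrightarrow> \<phi> \<in> T \<or> \<psi> \<in> T)"

definition Ucol :: "nat \<Rightarrow> form set \<Rightarrow> nat set" where
  "Ucol n T = {i. i < n \<and> Var i \<in> T}"

text \<open>U(n): points of the canonical model with finite up-set; ordered by inclusion.\<close>
definition Univ :: "nat \<Rightarrow> form set set" where
  "Univ n = {T. prime_theory n T \<and> finite {S. prime_theory n S \<and> T \<subseteq> S}}"

end

theory Submission
  imports Defs
begin
fun sat :: "'a set \<Rightarrow> ('a\<Rightarrow>'a\<Rightarrow>bool) \<Rightarrow> ('a \<Rightarrow> nat set) \<Rightarrow> 'a \<Rightarrow> form \<Rightarrow> bool" where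
  "sat A le c x (Var i) = (i \<in> c x)"
| "sat A le c x Bot = False"
| "sat A le c x (Conj a b) = (sat A le c x a \<and> sat A le c x b)"
| "sat A le c x (Disj a b) = (sat A le c x a \<or> sat A le c x b)"
| "sat A le c x (Impl a b) = (\<forall>y\<in>A. le x y \<longrightarrow> sat A le c y a \<longrightarrow> sat A le c y b)"

lemma pmorph_sat:
  assumes "p_morphism A le c B le' c' h" "x \<in> A"
  shows "sat B le' c' (h x) \<phi> = sat A le c x \<phi>"
  using assms(2)
proof (induction \<phi> arbitrary: x)
  case (Impl a b)
  show ?case
  proof
    assume H: "sat B le' c' (h x) (Impl a b)"
    show "sat A le c x (Impl a b)"
    proof (simp, intro ballI impI)
      fix y assume "y \<in> A" "le x y" "sat A le c y a"
      then have "h y \<in> B" "le' (h x) (h y)" using assms(1) Impl.prems unfolding p_morphism_def by auto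
      with H Impl.IH \<open>y \<in> A\<close> \<open>sat A le c y a\<close> show "sat A le c y b" by auto
    qed
  next
    assume H: "sat A le c x (Impl a b)"
    show "sat B le' c' (h x) (Impl a b)"
    proof (simp, intro ballI impI)
      fix y assume "y \<in> B" "le' (h x) y" "sat B le' c' y a"
      then obtain x' where "x' \<in> A" "le x x'" "h x' = y" using assms(1) Impl.prems unfolding p_morphism_def by blast
      with H Impl.IH \<open>sat B le' c' y a\<close> show "sat B le' c' y b" by auto
    qed
  qed
qed (use assms(1) in \<open>auto simp: p_morphism_def\<close>)

lemma sub_sat:
  assumes "S \<subseteq> A" "\<forall>x\<in>S. \<forall>y\<in>A. le x y \<longrightarrow> y \<in> S" "x \<in> S"
  shows "sat S le c x \<phi> = sat A le c x \<phi>"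
  using assms(3)
proof (induction \<phi> arbitrary: x)
  case (Impl a b)
  then show ?case using assms(1,2) by (auto; blast)
qed auto

definition thy :: "nat \<Rightarrow> form set \<Rightarrow> bool" where
  "thy n T \<longleftrightarrow> T \<subseteq> lang n \<and> (\<forall>\<phi>\<in>lang n. ipc \<phi> \<longrightarrow> \<phi> \<in> T) \<and>
     (\<forall>\<phi> \<psi>. \<phi> \<in> T \<longrightarrow> Impl \<phi> \<psi> \<in> T \<longrightarrow> \<psi> \<in> T)"

lemma lang_simps[simp]:
  "Impl a b \<in> lang n \<longleftrightarrow> a \<in> lang n \<and> b \<in> lang n"
  "Conj a b \<in> lang n \<longleftrightarrow> a \<in> lang n \<and> b \<in> lang n"
  "Disj a b \<in> lang n \<longleftrightarrow> a \<in> lang n \<and> b \<in> lang n"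
  "Bot \<in> lang n"
  "Var i \<in> lang n \<longleftrightarrow> i < n"
  by (auto simp: lang_def)

lemma prime_thy: "prime_theory n T \<Longrightarrow> thy n T"
  unfolding prime_theory_def thy_def by blast

lemma ipc_I: "ipc (Impl a a)"
proof -
  have "ipc (Impl (Impl a (Impl a a)) (Impl a a))"
    using ipc.mp[OF ipc.ax_S[of a "Impl a a" a] ipc.ax_K[of a "Impl a a"]] .
  then show ?thesis using ipc.mp ipc.ax_K[of a a] by blast
qed

lemma ipc_lang_aux: "Impl \<phi> \<psi> \<in> lang n \<longleftrightarrow> \<phi> \<in> lang n \<and> \<psi> \<in> lang n"
  by simp

lemma thy_ipc_mp:
  assumes "thy n T" "ipc (Impl \<phi> \<psi>)" "\<phi> \<in> lang n" "\<psi> \<in> lang n" "\<phi> \<in> T"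
  shows "\<psi> \<in> T"
  using assms unfolding thy_def by (metis ipc_lang_aux)

lemma thy_lang: "thy n T \<Longrightarrow> \<phi> \<in> T \<Longrightarrow> \<phi> \<in> lang n"
  unfolding thy_def by blast
lemma thy_thm: "thy n T \<Longrightarrow> \<phi> \<in> lang n \<Longrightarrow> ipc \<phi> \<Longrightarrow> \<phi> \<in> T"
  unfolding thy_def by blast
lemma thy_mp: "thy n T \<Longrightarrow> \<phi> \<in> T \<Longrightarrow> Impl \<phi> \<psi> \<in> T \<Longrightarrow> \<psi> \<in> T"
  unfolding thy_def by blast
lemma thy_mp2: "thy n T \<Longrightarrow> \<phi> \<in> T \<Longrightarrow> \<psi> \<in> T \<Longrightarrow> Impl \<phi> (Impl \<psi> \<chi>) \<in> T \<Longrightarrow> \<chi> \<in> T"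
  by (meson thy_mp)

lemma thy_ext:
  assumes T: "thy n T" and a: "a \<in> lang n"
  shows "thy n {\<phi>\<in>lang n. Impl a \<phi> \<in> T}" "T \<subseteq> {\<phi>\<in>lang n. Impl a \<phi> \<in> T}"
    "a \<in> {\<phi>\<in>lang n. Impl a \<phi> \<in> T}"
proof -
  have K: "Impl a \<psi> \<in> T" if "\<psi> \<in> T" for \<psi>
  proof -
    have "\<psi> \<in> lang n" using that T by (rule thy_lang[rotated])
    then show ?thesis using thy_ipc_mp[OF T ipc.ax_K[of \<psi> a]] a that by auto
  qed
  show "T \<subseteq> {\<phi>\<in>lang n. Impl a \<phi> \<in> T}" using K T thy_lang by blast
  show "a \<in> {\<phi>\<in>lang n. Impl a \<phi> \<in> T}" using thy_thm[OF T _ ipc_I[of a]] a by simp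
  show "thy n {\<phi>\<in>lang n. Impl a \<phi> \<in> T}"
    unfolding thy_def
  proof (intro conjI ballI allI impI)
    fix \<phi> assume "\<phi> \<in> lang n" "ipc \<phi>"
    then show "\<phi> \<in> {\<phi> \<in> lang n. Impl a \<phi> \<in> T}" using K thy_thm[OF T] by blast
  next
    fix \<phi> \<psi> assume H: "\<phi> \<in> {\<phi> \<in> lang n. Impl a \<phi> \<in> T}" "Impl \<phi> \<psi> \<in> {\<phi> \<in> lang n. Impl a \<phi> \<in> T}"
    then have L: "\<phi> \<in> lang n" "\<psi> \<in> lang n" by auto
    have "Impl (Impl a (Impl \<phi> \<psi>)) (Impl (Impl a \<phi>) (Impl a \<psi>)) \<in> T"
      using thy_thm[OF T _ ipc.ax_S[of a \<phi> \<psi>]] a L by simp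
    then have "Impl a \<psi> \<in> T" using thy_mp2[OF T] H by blast
    then show "\<psi> \<in> {\<phi> \<in> lang n. Impl a \<phi> \<in> T}" using L by auto
  next
    show "{\<phi> \<in> lang n. Impl a \<phi> \<in> T} \<subseteq> lang n" by blast
  qed
qed

lemma prime_ext:
  assumes D: "thy n D" and b: "b \<in> lang n" "b \<notin> D"
  shows "\<exists>S. prime_theory n S \<and> D \<subseteq> S \<and> b \<notin> S"
proof -
  let ?F = "{S. thy n S \<and> D \<subseteq> S \<and> b \<notin> S}"
  have "\<forall>C\<in>chains ?F. \<exists>U\<in>?F. \<forall>X\<in>C. X \<subseteq> U"
  proof
    fix C assume C: "C \<in> chains ?F"
    show "\<exists>U\<in>?F. \<forall>X\<in>C. X \<subseteq> U"
    proof (cases "C = {}")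
      case True
      have "D \<in> ?F" using D b by blast
      then show ?thesis using True by blast
    next
      case False
      have ch1: "X \<subseteq> Y \<or> Y \<subseteq> X" if "X \<in> C" "Y \<in> C" for X Y
        using C that unfolding chains_def chain_subset_def by blast
      have ch2: "thy n X" "D \<subseteq> X" "b \<notin> X" if "X \<in> C" for X
        using C that unfolding chains_def by blast+
      obtain X0 where X0: "X0 \<in> C" using False by blast
      have "thy n (\<Union>C)"
        unfolding thy_def
      proof (intro conjI)
        show "\<Union>C \<subseteq> lang n"
        proof
          fix \<phi> assume "\<phi> \<in> \<Union>C"
          then obtain X where "X \<in> C" "\<phi> \<in> X" by blast
          then show "\<phi> \<in> lang n" using thy_lang ch2 by blast
        qed
        show "\<forall>\<phi>\<in>lang n. ipc \<phi> \<longrightarrow> \<phi> \<in> \<Union>C"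
        proof (intro ballI impI)
          fix \<phi> assume "\<phi> \<in> lang n" "ipc \<phi>"
          then have "\<phi> \<in> X0" using thy_thm[OF ch2(1)[OF X0]] by blast
          then show "\<phi> \<in> \<Union>C" using X0 by blast
        qed
        show "\<forall>\<phi> \<psi>. \<phi> \<in> \<Union>C \<longrightarrow> Impl \<phi> \<psi> \<in> \<Union>C \<longrightarrow> \<psi> \<in> \<Union>C"
        proof (intro allI impI)
          fix \<phi> \<psi> assume "\<phi> \<in> \<Union>C" "Impl \<phi> \<psi> \<in> \<Union>C"
          then obtain X Y where XY: "X \<in> C" "Y \<in> C" "\<phi> \<in> X" "Impl \<phi> \<psi> \<in> Y" by blast
          show "\<psi> \<in> \<Union>C"
          proof (cases "X \<subseteq> Y")
            case True
            then have "\<psi> \<in> Y" using thy_mp[OF ch2(1)[OF XY(2)]] XY by blast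
            then show ?thesis using XY by blast
          next
            case False
            then have "Y \<subseteq> X" using ch1 XY by blast
            then have "\<psi> \<in> X" using thy_mp[OF ch2(1)[OF XY(1)]] XY by blast
            then show ?thesis using XY by blast
          qed
        qed
      qed
      moreover have "D \<subseteq> \<Union>C" using ch2 X0 by blast
      moreover have "b \<notin> \<Union>C" using ch2 by blast
      ultimately have "\<Union>C \<in> ?F" by blast
      then show ?thesis by blast
    qed
  qed
  from Zorn_Lemma2[OF this] obtain M where M: "M \<in> ?F" and max: "\<forall>X\<in>?F. M \<subseteq> X \<longrightarrow> X = M"
    by blast
  have thM: "thy n M" using M by auto
  have P1: "M \<subseteq> lang n" "\<forall>\<phi>\<in>lang n. ipc \<phi> \<longrightarrow> \<phi> \<in> M" "\<forall>\<phi> \<psi>. \<phi> \<in> M \<longrightarrow> Impl \<phi> \<psi> \<in> M \<longrightarrow> \<psi> \<in> M"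
    using thM unfolding thy_def by (blast, blast, blast)
  have P2: "Bot \<notin> M"
    proof
      assume "Bot \<in> M"
      then have "b \<in> M" using thy_ipc_mp[OF thM ipc.ax_EFQ[of b]] b by auto
      then show False using M by auto
    qed
  have P3: "\<phi> \<in> M \<or> \<psi> \<in> M" if Dj: "Disj \<phi> \<psi> \<in> M" for \<phi> \<psi>
  proof -
    have L: "\<phi> \<in> lang n" "\<psi> \<in> lang n" using thy_lang[OF thM Dj] by auto
    show "\<phi> \<in> M \<or> \<psi> \<in> M"
    proof (rule ccontr)
      assume nn: "\<not> (\<phi> \<in> M \<or> \<psi> \<in> M)"
      have imp: "Impl \<chi> b \<in> M" if "\<chi> \<in> lang n" "\<chi> \<notin> M" for \<chi>
      proof -
        let ?E = "{\<phi>\<in>lang n. Impl \<chi> \<phi> \<in> M}"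
        have "thy n ?E" "M \<subseteq> ?E" "\<chi> \<in> ?E" using thy_ext[OF thM that(1)] by auto
        then have "?E \<noteq> M" "D \<subseteq> ?E" using that M by auto
        then have "b \<in> ?E" using max \<open>thy n ?E\<close> \<open>M \<subseteq> ?E\<close> by blast
        then show ?thesis by auto
      qed
      have i1: "Impl \<phi> b \<in> M" "Impl \<psi> b \<in> M" using imp L nn by auto
      have "Impl (Impl \<phi> b) (Impl (Impl \<psi> b) (Impl (Disj \<phi> \<psi>) b)) \<in> M"
        using thy_thm[OF thM _ ipc.ax_D3[of \<phi> b \<psi>]] L b by simp
      then have "Impl (Disj \<phi> \<psi>) b \<in> M" by (rule thy_mp2[OF thM i1])
      then have "b \<in> M" by (rule thy_mp[OF thM Dj])
      then show False using M by auto
    qed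
  qed
  have "prime_theory n M" unfolding prime_theory_def using P1 P2 P3 by blast
  then show ?thesis using M by auto
qed

lemma Univ_prime: "T \<in> Univ n \<Longrightarrow> prime_theory n T"
  by (simp add: Univ_def)

lemma truth:
  assumes "T \<in> Univ n" "\<phi> \<in> lang n"
  shows "sat (Univ n) (\<subseteq>) (Ucol n) T \<phi> \<longleftrightarrow> \<phi> \<in> T"
  using assms
proof (induction \<phi> arbitrary: T)
  case (Var i)
  then show ?case by (auto simp: Ucol_def)
next
  case Bot
  then show ?case by (auto simp: Univ_def prime_theory_def)
next
  case (Conj a b)
  have th: "thy n T" using Conj.prems prime_thy Univ_prime by blast
  have "Conj a b \<in> T \<longleftrightarrow> a \<in> T \<and> b \<in> T"
  proof
    assume "Conj a b \<in> T" then show "a \<in> T \<and> b \<in> T"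
      using thy_ipc_mp[OF th ipc.ax_C1[of a b]] thy_ipc_mp[OF th ipc.ax_C2[of a b]] Conj.prems by auto
  next
    assume "a \<in> T \<and> b \<in> T"
    moreover have "Impl a (Impl b (Conj a b)) \<in> T" using thy_thm[OF th _ ipc.ax_C3[of a b]] Conj.prems by simp
    ultimately show "Conj a b \<in> T" using thy_mp2[OF th] by blast
  qed
  then show ?case using Conj by auto
next
  case (Disj a b)
  have th: "thy n T" using Disj.prems prime_thy Univ_prime by blast
  have "Disj a b \<in> T \<longleftrightarrow> a \<in> T \<or> b \<in> T"
  proof
    assume "Disj a b \<in> T" then show "a \<in> T \<or> b \<in> T"
      using Disj.prems Univ_prime unfolding prime_theory_def by blast
  next
    assume "a \<in> T \<or> b \<in> T"
    then show "Disj a b \<in> T"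
      using thy_ipc_mp[OF th ipc.ax_D1[of a b]] thy_ipc_mp[OF th ipc.ax_D2[of b a]] Disj.prems by auto
  qed
  then show ?case using Disj by auto
next
  case (Impl a b)
  have th: "thy n T" using Impl.prems prime_thy Univ_prime by blast
  have L: "a \<in> lang n" "b \<in> lang n" using Impl.prems by auto
  show ?case
  proof
    assume H: "sat (Univ n) (\<subseteq>) (Ucol n) T (Impl a b)"
    show "Impl a b \<in> T"
    proof (rule ccontr)
      assume nI: "Impl a b \<notin> T"
      let ?D = "{\<phi>\<in>lang n. Impl a \<phi> \<in> T}"
      have D: "thy n ?D" "T \<subseteq> ?D" "a \<in> ?D" using thy_ext[OF th L(1)] by auto
      have "b \<notin> ?D" using nI by auto
      then obtain S where S: "prime_theory n S" "?D \<subseteq> S" "b \<notin> S" using prime_ext[OF D(1) L(2)] by blast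
      have "{S'. prime_theory n S' \<and> S \<subseteq> S'} \<subseteq> {S'. prime_theory n S' \<and> T \<subseteq> S'}" using S D by auto
      then have "S \<in> Univ n" using S Impl.prems(1) by (auto simp: Univ_def intro: finite_subset)
      moreover have "T \<subseteq> S" "a \<in> S" using S D by auto
      ultimately show False using H Impl.IH L S by auto
    qed
  next
    assume I: "Impl a b \<in> T"
    show "sat (Univ n) (\<subseteq>) (Ucol n) T (Impl a b)"
    proof (simp, intro ballI impI)
      fix y assume y: "y \<in> Univ n" "T \<subseteq> y" "sat (Univ n) (\<subseteq>) (Ucol n) y a"
      then have "a \<in> y" "Impl a b \<in> y" using Impl.IH L I by auto
      moreover have "thy n y" using y prime_thy Univ_prime by blast
      ultimately have "b \<in> y" using thy_mp by blast
      then show "sat (Univ n) (\<subseteq>) (Ucol n) y b" using Impl.IH L y by auto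
    qed
  qed
qed

lemma Univ_lang: "T \<in> Univ n \<Longrightarrow> T \<subseteq> lang n"
  by (simp add: Univ_def prime_theory_def)

lemma Univ_eq:
  assumes "T \<in> Univ n" "S \<in> Univ n" "\<And>\<phi>. \<phi> \<in> lang n \<Longrightarrow> sat (Univ n) (\<subseteq>) (Ucol n) T \<phi> = sat (Univ n) (\<subseteq>) (Ucol n) S \<phi>"
  shows "T = S"
  using assms truth Univ_lang by blast

lemma determ:
  assumes "T \<in> Univ n" "S \<in> Univ n" "Ucol n T = Ucol n S"
    "{X\<in>Univ n. T \<subset> X} = {X\<in>Univ n. S \<subset> X}"
  shows "T = S"
proof (rule Univ_eq[OF assms(1,2)])
  fix \<phi>
  show "sat (Univ n) (\<subseteq>) (Ucol n) T \<phi> = sat (Univ n) (\<subseteq>) (Ucol n) S \<phi>"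
  proof (induction \<phi>)
    case (Impl a b)
    have e: "(\<forall>y\<in>Univ n. Z \<subseteq> y \<longrightarrow> P y) \<longleftrightarrow> P Z \<and> (\<forall>y\<in>{X\<in>Univ n. Z \<subset> X}. P y)"
      if "Z \<in> Univ n" for Z P using that by auto
    show ?case using e[OF assms(1)] e[OF assms(2)] assms(4) Impl by simp
  qed (use assms(3) in auto)
qed

lemma pm_into: "p_morphism A le c B le' c' h \<Longrightarrow> x \<in> A \<Longrightarrow> h x \<in> B"
  unfolding p_morphism_def by blast

lemma sep_image:
  assumes h: "p_morphism (sep_points n A le c) le c (Univ n) (\<subseteq>) (Ucol n) h"
  shows "h ` sep_points n A le c \<subseteq> sep_points n (Univ n) (\<subseteq>) (Ucol n)"
    "generated_sub (Univ n) (\<subseteq>) (h ` sep_points n A le c)"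
proof -
  show "generated_sub (Univ n) (\<subseteq>) (h ` sep_points n A le c)"
    using h unfolding generated_sub_def p_morphism_def by blast
  show "h ` sep_points n A le c \<subseteq> sep_points n (Univ n) (\<subseteq>) (Ucol n)"
  proof
    fix T assume "T \<in> h ` sep_points n A le c"
    then obtain x where x: "x \<in> sep_points n A le c" "T = h x" by auto
    then obtain q where q: "q < n" "q \<notin> c x" "\<forall>y\<in>A. le x y \<and> y \<noteq> x \<longrightarrow> q \<in> c y"
      by (auto simp: sep_points_def)
    have TU: "T \<in> Univ n" and col: "Ucol n T = c x" using h x unfolding p_morphism_def by auto
    have "\<forall>S\<in>Univ n. T \<subseteq> S \<and> S \<noteq> T \<longrightarrow> q \<in> Ucol n S"
    proof (intro ballI impI)
      fix S assume S: "S \<in> Univ n" "T \<subseteq> S \<and> S \<noteq> T"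
      then obtain x' where x': "x' \<in> sep_points n A le c" "le x x'" "h x' = S"
        using h x unfolding p_morphism_def by blast
      then have "x' \<noteq> x" "x' \<in> A" using S x by (auto simp: sep_points_def)
      then have "q \<in> c x'" using q x' by auto
      then show "q \<in> Ucol n S" using h x' unfolding p_morphism_def by auto
    qed
    then show "T \<in> sep_points n (Univ n) (\<subseteq>) (Ucol n)"
      using TU q col by (auto simp: sep_points_def)
  qed
qed

lemma chain_sep:
  assumes C: "C \<subseteq> sep_points n (Univ n) (\<subseteq>) (Ucol n)" "\<forall>x\<in>C. \<forall>y\<in>C. x \<subseteq> y \<or> y \<subseteq> x"
  shows "finite C \<and> card C \<le> n"
proof -
  define P where "P T q \<longleftrightarrow> q < n \<and> q \<notin> Ucol n T \<and> (\<forall>S\<in>Univ n. T \<subseteq> S \<and> S \<noteq> T \<longrightarrow> q \<in> Ucol n S)" for T q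
  define w where "w T = (SOME q. P T q)" for T
  have w: "P T (w T)" if "T \<in> C" for T
  proof -
    have "\<exists>q. P T q" using that C(1) by (auto simp: sep_points_def P_def)
    then show ?thesis unfolding w_def by (rule someI_ex)
  qed
  have inj: "inj_on w C"
  proof (rule inj_onI)
    fix T S assume TS: "T \<in> C" "S \<in> C" "w T = w S"
    show "T = S"
    proof (rule ccontr)
      assume ne: "T \<noteq> S"
      have U: "T \<in> Univ n" "S \<in> Univ n" using TS C by (auto simp: sep_points_def)
      from C(2) TS have "T \<subseteq> S \<or> S \<subseteq> T" by auto
      then show False
      proof
        assume "T \<subseteq> S" then have "w T \<in> Ucol n S" using w[OF TS(1)] U ne unfolding P_def by auto
        then show False using w[OF TS(2)] TS(3) unfolding P_def by auto
      next
        assume "S \<subseteq> T" then have "w S \<in> Ucol n T" using w[OF TS(2)] U ne unfolding P_def by auto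
        then show False using w[OF TS(1)] TS(3) unfolding P_def by auto
      qed
    qed
  qed
  have sub: "w ` C \<subseteq> {..<n}" using w unfolding P_def by auto
  then have "finite (w ` C)" by (rule finite_subset) auto
  then have "finite C" using inj finite_imageD by blast
  moreover have "card C \<le> n"
    using card_mono[OF _ sub] card_image[OF inj] by simp
  ultimately show ?thesis by auto
qed

lemma fin_up:
  assumes W: "W \<subseteq> sep_points n (Univ n) (\<subseteq>) (Ucol n)" "\<forall>x\<in>W. \<forall>y\<in>Univ n. x \<subseteq> y \<longrightarrow> y \<in> W"
  shows "finite W"
proof -
  have WU: "W \<subseteq> Univ n" using W by (auto simp: sep_points_def)
  define P where "P k = {T\<in>W. \<forall>C. C \<subseteq> {S\<in>W. T \<subseteq> S} \<and> (\<forall>x\<in>C. \<forall>y\<in>C. x \<subseteq> y \<or> y \<subseteq> x) \<longrightarrow> card C \<le> k}" for k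
  have cf: "finite C \<and> card C \<le> n" if "C \<subseteq> W" "\<forall>x\<in>C. \<forall>y\<in>C. x \<subseteq> y \<or> y \<subseteq> x" for C
    using chain_sep[of C n] that W(1) by blast
  have "W \<subseteq> P n"
  proof
    fix T assume "T \<in> W"
    have H: "card C \<le> n" if "C \<subseteq> {S\<in>W. T \<subseteq> S}" "\<forall>x\<in>C. \<forall>y\<in>C. x \<subseteq> y \<or> y \<subseteq> x" for C
    proof -
      have "C \<subseteq> W" using that(1) by blast
      from cf[OF this that(2)] show ?thesis by (rule conjunct2)
    qed
    have "\<forall>C. C \<subseteq> {S\<in>W. T \<subseteq> S} \<and> (\<forall>x\<in>C. \<forall>y\<in>C. x \<subseteq> y \<or> y \<subseteq> x) \<longrightarrow> card C \<le> n"
    proof (intro allI impI)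
      fix C assume "C \<subseteq> {S\<in>W. T \<subseteq> S} \<and> (\<forall>x\<in>C. \<forall>y\<in>C. x \<subseteq> y \<or> y \<subseteq> x)"
      then show "card C \<le> n" by (elim conjE) (rule H)
    qed
    then show "T \<in> P n" unfolding P_def by (intro CollectI conjI \<open>T \<in> W\<close>)
  qed
  moreover have "finite (P k)" for k
  proof (induction k)
    case 0
    have "P 0 = {}"
    proof (rule ccontr)
      assume "P 0 \<noteq> {}"
      then obtain T where "T \<in> P 0" by auto
      then have TW: "T \<in> W" and TP: "\<forall>C. C \<subseteq> {S\<in>W. T \<subseteq> S} \<and> (\<forall>x\<in>C. \<forall>y\<in>C. x \<subseteq> y \<or> y \<subseteq> x) \<longrightarrow> card C \<le> 0"
        unfolding P_def by simp_all
      have "{T} \<subseteq> {S\<in>W. T \<subseteq> S} \<and> (\<forall>x\<in>{T}. \<forall>y\<in>{T}. x \<subseteq> y \<or> y \<subseteq> x)" using TW by simp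
      then have "card {T} \<le> 0" by (rule HOL.mp[OF spec[OF TP]])
      then show False by simp
    qed
    then show ?case by simp
  next
    case (Suc k)
    define F where "F T = (Ucol n T, {S\<in>W. T \<subset> S})" for T
    have succ: "{S\<in>W. T \<subset> S} \<subseteq> P k" if T: "T \<in> P (Suc k)" for T
    proof
      fix S assume S: "S \<in> {S\<in>W. T \<subset> S}"
      have "card C \<le> k" if C: "C \<subseteq> {X\<in>W. S \<subseteq> X}" "\<forall>x\<in>C. \<forall>y\<in>C. x \<subseteq> y \<or> y \<subseteq> x" for C
      proof -
        have CW: "C \<subseteq> W" using C(1) by blast
        have fC: "finite C" using cf[OF CW C(2)] by blast
        have TS': "T \<subset> S" "S \<in> W" using S by blast+
        have TC: "T \<notin> C" using C(1) TS' by blast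
        have TW: "T \<in> W" and TP: "\<forall>C. C \<subseteq> {S\<in>W. T \<subseteq> S} \<and> (\<forall>x\<in>C. \<forall>y\<in>C. x \<subseteq> y \<or> y \<subseteq> x) \<longrightarrow> card C \<le> Suc k"
          using T unfolding P_def by simp_all
        have "insert T C \<subseteq> {X\<in>W. T \<subseteq> X}" using C(1) TS' TW by blast
        moreover have "\<forall>x\<in>insert T C. \<forall>y\<in>insert T C. x \<subseteq> y \<or> y \<subseteq> x"
        proof -
          have "\<forall>x\<in>C. T \<subseteq> x" using C(1) TS' by blast
          then show ?thesis using C(2) by blast
        qed
        ultimately have "card (insert T C) \<le> Suc k" by (intro HOL.mp[OF spec[OF TP]] conjI)
        then show ?thesis using fC TC by simp
      qed
      then have "\<forall>C. C \<subseteq> {X\<in>W. S \<subseteq> X} \<and> (\<forall>x\<in>C. \<forall>y\<in>C. x \<subseteq> y \<or> y \<subseteq> x) \<longrightarrow> card C \<le> k"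
        by (intro allI impI) (elim conjE)
      moreover have "S \<in> W" using S by simp
      ultimately show "S \<in> P k" unfolding P_def by (intro CollectI conjI)
    qed
    have inj: "inj_on F (P (Suc k))"
    proof (rule inj_onI)
      fix T S assume TS: "T \<in> P (Suc k)" "S \<in> P (Suc k)" "F T = F S"
      have TW: "T \<in> W" "S \<in> W" using TS(1,2) unfolding P_def by simp_all
      have U: "T \<in> Univ n" "S \<in> Univ n" using TW WU by blast+
      have e: "{X\<in>Univ n. Z \<subset> X} = {X\<in>W. Z \<subset> X}" if "Z \<in> W" for Z
        using that W(2) WU by blast
      have "Ucol n T = Ucol n S" "{X\<in>W. T \<subset> X} = {X\<in>W. S \<subset> X}"
        using TS(3) unfolding F_def by simp_all
      then show "T = S"
        using determ[OF U] e[OF TW(1)] e[OF TW(2)] by simp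
    qed
    have "F ` P (Suc k) \<subseteq> Pow {..<n} \<times> Pow (P k)"
    proof
      fix z assume "z \<in> F ` P (Suc k)"
      then obtain T where T: "T \<in> P (Suc k)" "z = F T" by blast
      have "Ucol n T \<subseteq> {..<n}" unfolding Ucol_def by blast
      then show "z \<in> Pow {..<n} \<times> Pow (P k)" using succ[OF T(1)] T(2) unfolding F_def by simp
    qed
    moreover have "finite (Pow {..<n} \<times> Pow (P k))" using Suc by simp
    ultimately have "finite (F ` P (Suc k))" by (rule finite_subset)
    then show ?case using inj finite_imageD by blast
  qed
  ultimately show ?thesis using finite_subset by blast
qed

theorem lemma3p8:
  fixes n :: nat and A :: "'a set" and le :: "'a \<Rightarrow> 'a \<Rightarrow> bool" and c :: "'a \<Rightarrow> nat set"
    and f :: "'a \<Rightarrow> form set" and g :: "form set \<Rightarrow> form set"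
  assumes "n \<ge> 1"
    and "is_model n A le c"
    and "p_morphism (sep_points n A le c) le c (Univ n) (\<subseteq>) (Ucol n) f"
    and "p_morphism (sep_points n (Univ n) (\<subseteq>) (Ucol n)) (\<subseteq>) (Ucol n) (Univ n) (\<subseteq>) (Ucol n) g"
  shows "f ` sep_points n A le c \<subseteq> g ` sep_points n (Univ n) (\<subseteq>) (Ucol n)
     \<and> generated_sub (Univ n) (\<subseteq>) (f ` sep_points n A le c)
     \<and> (\<forall>C. is_chain_in (\<subseteq>) (f ` sep_points n A le c) C \<longrightarrow> finite C \<and> card C \<le> n)
     \<and> finite (f ` sep_points n A le c)
     \<and> finite (g ` sep_points n (Univ n) (\<subseteq>) (Ucol n))"
proof -
  let ?Ms = "sep_points n A le c" and ?U = "Univ n" and ?Us = "sep_points n (Univ n) (\<subseteq>) (Ucol n)"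
  have f1: "f ` ?Ms \<subseteq> ?Us" and f2: "generated_sub ?U (\<subseteq>) (f ` ?Ms)"
    using sep_image[OF assms(3)] by auto
  have g1: "g ` ?Us \<subseteq> ?Us" and g2: "generated_sub ?U (\<subseteq>) (g ` ?Us)"
    using sep_image[OF assms(4)] by auto
  have UsU: "?Us \<subseteq> ?U" by (auto simp: sep_points_def)
  have up: "\<forall>x\<in>f ` ?Ms. \<forall>y\<in>?U. x \<subseteq> y \<longrightarrow> y \<in> f ` ?Ms" using f2 by (simp add: generated_sub_def)
  have upUs: "\<forall>x\<in>f ` ?Ms. \<forall>y\<in>?Us. x \<subseteq> y \<longrightarrow> y \<in> f ` ?Ms" using up UsU by blast
  have fU: "f ` ?Ms \<subseteq> ?U" using f1 UsU by blast
  have claim1: "f ` ?Ms \<subseteq> g ` ?Us"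
  proof
    fix T assume T: "T \<in> f ` ?Ms"
    have TUs: "T \<in> ?Us" using f1 T by (rule subsetD)
    have gT: "g T \<in> ?U" using pm_into[OF assms(4) TUs] .
    have "g T = T"
    proof (rule Univ_eq[OF gT])
      show "T \<in> ?U" using TUs UsU by (rule subsetD[rotated])
      fix \<phi>
      have "sat ?U (\<subseteq>) (Ucol n) (g T) \<phi> = sat ?Us (\<subseteq>) (Ucol n) T \<phi>"
        using pmorph_sat[OF assms(4) TUs] .
      also have "\<dots> = sat (f ` ?Ms) (\<subseteq>) (Ucol n) T \<phi>"
        using sub_sat[OF f1 upUs T, of "Ucol n" \<phi>] by simp
      also have "\<dots> = sat ?U (\<subseteq>) (Ucol n) T \<phi>"
        using sub_sat[OF fU up T, of "Ucol n" \<phi>] by simp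
      finally show "sat ?U (\<subseteq>) (Ucol n) (g T) \<phi> = sat ?U (\<subseteq>) (Ucol n) T \<phi>" .
    qed
    then show "T \<in> g ` ?Us" using image_eqI[OF sym TUs, of g] by simp
  qed
  have chains: "\<forall>C. is_chain_in (\<subseteq>) (f ` ?Ms) C \<longrightarrow> finite C \<and> card C \<le> n"
  proof (intro allI impI)
    fix C assume "is_chain_in (\<subseteq>) (f ` ?Ms) C"
    then have "C \<subseteq> f ` ?Ms" "\<forall>x\<in>C. \<forall>y\<in>C. x \<subseteq> y \<or> y \<subseteq> x" unfolding is_chain_in_def by simp_all
    then show "finite C \<and> card C \<le> n" using chain_sep[of C n] f1 by (meson subset_trans)
  qed
  have fin1: "finite (f ` ?Ms)" using fin_up[OF f1] f2 by (simp add: generated_sub_def)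
  have fin2: "finite (g ` ?Us)" using fin_up[OF g1] g2 by (simp add: generated_sub_def)
  show ?thesis using claim1 f2 chains fin1 fin2 by (intro conjI)
qed

end
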